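(* Every polynomial functor on $\mathsf{Nom}$ has a canonical locally monotone extension to $\mathrm{Kl}(\mathcal{P}_{\mathsf{fs}})$.
   Context: Fix a countably infinite set $\mathbb{A}$ of names; $\mathsf{Nom}$ is the category of nominal sets and equivariant maps. $\mathcal{P}_{\mathsf{fs}}$ is the monad of finitely supported subsets on $\mathsf{Nom}$, with unit $x\mapsto\{x\}$ and multiplication union; $\mathrm{Kl}(\mathcal{P}_{\mathsf{fs}})$ is its Kleisli category and $J\colon\mathsf{Nom}\to\mathrm{Kl}(\mathcal{P}_{\mathsf{fs}})$ the canonical functor. Polynomial functors are those generated by the grammar $F::=C\mid\mathrm{Id}\mid F\times F\mid\coprod_{i\in I}F_i$, with $C$ ranging over constant functors and $I$ arbitrary. An extension of $F$ is an endofunctor $\overline{F}$ on $\mathrm{Kl}(\mathcal{P}_{\mathsf{fs}})$ with $\overline{F}J=JF$; locally monotone means monotone on hom-sets ordered pointwise by inclusion. The canonical extension is built along the grammar: constants and identity extend trivially; coproducts via $\overline{F+G}(f)=[T\mathsf{inl},T\mathsf{inr}]\cdot(\overline{F}f+\overline{G}f)$; finite products via the double strength $d\colon TX\times TY\to T(X\times Y)$ of the commutative monad $\mathcal{P}_{\mathsf{fs}}$ (with strength $(x,S)\mapsto\{(x,s):s\in S\}$), i.e. $\overline{F\times G}(f)=d\cdot(\overline{F}f\times\overline{G}f)$. *)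

theory Defs
  imports Main
begin

text \<open>Names: the countably infinite set \<A> is modelled by the type nat.
  Finite permutations of names:\<close>
definition fperm :: "(nat \<Rightarrow> nat) \<Rightarrow> bool" where
  "fperm p \<longleftrightarrow> bij p \<and> finite {a. p a \<noteq> a}"

definition supports :: "((nat \<Rightarrow> nat) \<Rightarrow> 'x \<Rightarrow> 'x) \<Rightarrow> nat set \<Rightarrow> 'x \<Rightarrow> bool" where
  "supports act T x \<longleftrightarrow> (\<forall>p. fperm p \<and> (\<forall>a\<in>T. p a = a) \<longrightarrow> act p x = x)"

definition nominal_set :: "'x set \<Rightarrow> ((nat \<Rightarrow> nat) \<Rightarrow> 'x \<Rightarrow> 'x) \<Rightarrow> bool" where
  "nominal_set X act \<longleftrightarrow>
     (\<forall>x\<in>X. act id x = x) \<and>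
     (\<forall>p q x. fperm p \<and> fperm q \<and> x \<in> X \<longrightarrow> act (p \<circ> q) x = act p (act q x)) \<and>
     (\<forall>p x. fperm p \<and> x \<in> X \<longrightarrow> act p x \<in> X) \<and>
     (\<forall>x\<in>X. \<exists>T. finite T \<and> supports act T x)"

definition equivariant :: "'x set \<Rightarrow> ((nat \<Rightarrow> nat) \<Rightarrow> 'x \<Rightarrow> 'x) \<Rightarrow> 'y set \<Rightarrow>
    ((nat \<Rightarrow> nat) \<Rightarrow> 'y \<Rightarrow> 'y) \<Rightarrow> ('x \<Rightarrow> 'y) \<Rightarrow> bool" where
  "equivariant X ax Y ay h \<longleftrightarrow> (\<forall>x\<in>X. h x \<in> Y) \<and>
     (\<forall>p x. fperm p \<and> x \<in> X \<longrightarrow> h (ax p x) = ay p (h x))"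

definition set_act :: "((nat \<Rightarrow> nat) \<Rightarrow> 'x \<Rightarrow> 'x) \<Rightarrow> (nat \<Rightarrow> nat) \<Rightarrow> 'x set \<Rightarrow> 'x set" where
  "set_act act p S = act p ` S"

definition fs_subset :: "'x set \<Rightarrow> ((nat \<Rightarrow> nat) \<Rightarrow> 'x \<Rightarrow> 'x) \<Rightarrow> 'x set \<Rightarrow> bool" where
  "fs_subset Y act S \<longleftrightarrow> S \<subseteq> Y \<and> (\<exists>T. finite T \<and> supports (set_act act) T S)"

text \<open>Morphisms X \<rightarrow> Y of Kl(P_fs): equivariant maps X \<rightarrow> P_fs(Y).\<close>
definition kl_mor :: "'x set \<Rightarrow> ((nat \<Rightarrow> nat) \<Rightarrow> 'x \<Rightarrow> 'x) \<Rightarrow> 'y set \<Rightarrow>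
    ((nat \<Rightarrow> nat) \<Rightarrow> 'y \<Rightarrow> 'y) \<Rightarrow> ('x \<Rightarrow> 'y set) \<Rightarrow> bool" where
  "kl_mor X ax Y ay f \<longleftrightarrow> (\<forall>x\<in>X. fs_subset Y ay (f x)) \<and>
     (\<forall>p x. fperm p \<and> x \<in> X \<longrightarrow> f (ax p x) = set_act ay p (f x))"

definition kl_id :: "'x \<Rightarrow> 'x set" where "kl_id x = {x}"
definition kl_comp :: "('y \<Rightarrow> 'z set) \<Rightarrow> ('x \<Rightarrow> 'y set) \<Rightarrow> 'x \<Rightarrow> 'z set" where
  "kl_comp g f x = \<Union> (g ` f x)"
definition J :: "('x \<Rightarrow> 'y) \<Rightarrow> 'x \<Rightarrow> 'y set" where "J h x = {h x}"

text \<open>Syntax of polynomial functors.  Constants are nominal subsets of a fixed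
  ambient type 'c (with a fixed action); coproducts are indexed by subsets of 'i.\<close>
datatype ('c, 'i) pf =
    PConstF "'c set" | PIdF | PProdF "('c, 'i) pf" "('c, 'i) pf"
  | PCoprodF "'i set" "'i \<Rightarrow> ('c, 'i) pf"

text \<open>Universe of values of polynomial functors applied to a set of type 'x.\<close>
datatype ('c, 'i, 'x) pv =
    VConst 'c | VVar 'x | VPair "('c, 'i, 'x) pv" "('c, 'i, 'x) pv" | VInj 'i "('c, 'i, 'x) pv"

primrec wf_pf :: "((nat \<Rightarrow> nat) \<Rightarrow> 'c \<Rightarrow> 'c) \<Rightarrow> ('c, 'i) pf \<Rightarrow> bool" where
  "wf_pf ac (PConstF C) = nominal_set C ac"
| "wf_pf ac PIdF = True"
| "wf_pf ac (PProdF F G) = (wf_pf ac F \<and> wf_pf ac G)"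
| "wf_pf ac (PCoprodF I Fs) = (\<forall>i\<in>I. wf_pf ac (Fs i))"

primrec pobj :: "('c, 'i) pf \<Rightarrow> 'x set \<Rightarrow> ('c, 'i, 'x) pv set" where
  "pobj (PConstF C) X = VConst ` C"
| "pobj PIdF X = VVar ` X"
| "pobj (PProdF F G) X = {VPair u v | u v. u \<in> pobj F X \<and> v \<in> pobj G X}"
| "pobj (PCoprodF I Fs) X = {VInj i u | i u. i \<in> I \<and> u \<in> pobj (Fs i) X}"

definition pact :: "((nat \<Rightarrow> nat) \<Rightarrow> 'c \<Rightarrow> 'c) \<Rightarrow> ((nat \<Rightarrow> nat) \<Rightarrow> 'x \<Rightarrow> 'x) \<Rightarrow>
    (nat \<Rightarrow> nat) \<Rightarrow> ('c, 'i, 'x) pv \<Rightarrow> ('c, 'i, 'x) pv" where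
  "pact ac ax p = map_pv (ac p) id (ax p)"

definition pmap :: "('x \<Rightarrow> 'y) \<Rightarrow> ('c, 'i, 'x) pv \<Rightarrow> ('c, 'i, 'y) pv" where
  "pmap h = map_pv id id h"

text \<open>The canonical extension to Kl(P_fs), built along the grammar:
  constants and identity trivially, coproducts via [T inj_i]_i, products via
  the double strength d(A,B) = A \<times> B.\<close>
primrec pext :: "('c, 'i) pf \<Rightarrow> ('x \<Rightarrow> 'y set) \<Rightarrow> ('c, 'i, 'x) pv \<Rightarrow> ('c, 'i, 'y) pv set" where
  "pext (PConstF C) f v = (case v of VConst c \<Rightarrow> {VConst c} | _ \<Rightarrow> {})"
| "pext PIdF f v = (case v of VVar x \<Rightarrow> VVar ` f x | _ \<Rightarrow> {})"
| "pext (PProdF F G) f v = (case v of VPair a b \<Rightarrow>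
      {VPair a' b' | a' b'. a' \<in> pext F f a \<and> b' \<in> pext G f b} | _ \<Rightarrow> {})"
| "pext (PCoprodF I Fs) f v = (case v of VInj i u \<Rightarrow>
      (if i \<in> I then VInj i ` pext (Fs i) f u else {}) | _ \<Rightarrow> {})"

end

theory Submission
  imports Defs
begin

lemma pact_simps[simp]:
  "pact ac ax p (VConst c) = VConst (ac p c)"
  "pact ac ax p (VVar x) = VVar (ax p x)"
  "pact ac ax p (VPair a b) = VPair (pact ac ax p a) (pact ac ax p b)"
  "pact ac ax p (VInj i u) = VInj i (pact ac ax p u)"
  by (simp_all add: pact_def)

lemma pmap_simps[simp]:
  "pmap h (VConst c) = VConst c"
  "pmap h (VVar x) = VVar (h x)"
  "pmap h (VPair a b) = VPair (pmap h a) (pmap h b)"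
  "pmap h (VInj i u) = VInj i (pmap h u)"
  by (simp_all add: pmap_def)

lemma pact_pairs: "pact ac ay p ` {VPair a b |a b. a \<in> A \<and> b \<in> B} = {VPair a b |a b. a \<in> pact ac ay p ` A \<and> b \<in> pact ac ay p ` B}"
proof (rule set_eqI, rule iffI)
  fix z assume "z \<in> {VPair a b |a b. a \<in> pact ac ay p ` A \<and> b \<in> pact ac ay p ` B}"
  then obtain a b where "a \<in> A" "b \<in> B" "z = VPair (pact ac ay p a) (pact ac ay p b)" by blast
  then show "z \<in> pact ac ay p ` {VPair a b |a b. a \<in> A \<and> b \<in> B}"
    by (intro image_eqI[where x="VPair a b"]) auto
qed auto

lemma nom_id: "nominal_set X ax \<Longrightarrow> wf_pf ac F \<Longrightarrow> v \<in> pobj F X \<Longrightarrow> pact ac ax id v = v"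
  apply (induction F arbitrary: v) apply (auto simp: nominal_set_def) by (meson rangeI)

lemma nom_comp: "nominal_set X ax \<Longrightarrow> wf_pf ac F \<Longrightarrow> v \<in> pobj F X \<Longrightarrow> fperm p \<Longrightarrow> fperm q \<Longrightarrow>
   pact ac ax (p \<circ> q) v = pact ac ax p (pact ac ax q v)"
  apply (induction F arbitrary: v) apply (auto simp: nominal_set_def) by (meson rangeI)

lemma nom_cl: "nominal_set X ax \<Longrightarrow> wf_pf ac F \<Longrightarrow> v \<in> pobj F X \<Longrightarrow> fperm p \<Longrightarrow>
   pact ac ax p v \<in> pobj F X"
  by (induction F arbitrary: v) (auto simp: nominal_set_def)

lemma nom_supp: "nominal_set X ax \<Longrightarrow> wf_pf ac F \<Longrightarrow> v \<in> pobj F X \<Longrightarrow>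
   \<exists>T. finite T \<and> supports (pact ac ax) T v"
proof (induction F arbitrary: v)
  case (PConstF C)
  then obtain c where c: "v = VConst c" "c \<in> C" by auto
  have "nominal_set C ac" using PConstF.prems(2) by simp
  then obtain T where T: "finite T" "supports ac T c" using c(2) unfolding nominal_set_def by blast
  have "supports (pact ac ax) T v" using T(2) unfolding c(1) supports_def by simp
  then show ?case using T(1) by blast
next
  case PIdF
  then obtain x where c: "v = VVar x" "x \<in> X" by auto
  then obtain T where T: "finite T" "supports ax T x" using PIdF.prems(1) c(2) unfolding nominal_set_def by blast
  have "supports (pact ac ax) T v" using T(2) unfolding c(1) supports_def by simp
  then show ?case using T(1) by blast
next
  case (PProdF F G)
  then obtain a b where c: "v = VPair a b" "a \<in> pobj F X" "b \<in> pobj G X" by auto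
  obtain T1 where T1: "finite T1" "supports (pact ac ax) T1 a"
    using PProdF.IH(1)[OF PProdF.prems(1) _ c(2)] PProdF.prems(2) by auto
  obtain T2 where T2: "finite T2" "supports (pact ac ax) T2 b"
    using PProdF.IH(2)[OF PProdF.prems(1) _ c(3)] PProdF.prems(2) by auto
  have "supports (pact ac ax) (T1 \<union> T2) v" using T1(2) T2(2) unfolding c(1) supports_def by simp
  then show ?case using T1(1) T2(1) by blast
next
  case (PCoprodF I Fs)
  then obtain i u where c: "v = VInj i u" "i \<in> I" "u \<in> pobj (Fs i) X" by auto
  obtain T where T: "finite T" "supports (pact ac ax) T u"
    using PCoprodF.IH[OF rangeI PCoprodF.prems(1) _ c(3)] PCoprodF.prems(2) c(2) by auto
  have "supports (pact ac ax) T v" using T(2) unfolding c(1) supports_def by simp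
  then show ?case using T(1) by blast
qed

lemma nom_obj: assumes "nominal_set X ax" "wf_pf ac F" shows "nominal_set (pobj F X) (pact ac ax)"
  unfolding nominal_set_def[of "pobj F X"]
proof (intro conjI allI ballI impI)
  show "pact ac ax id x = x" if "x \<in> pobj F X" for x using nom_id[OF assms that] .
  show "pact ac ax (p \<circ> q) x = pact ac ax p (pact ac ax q x)"
    if "fperm p \<and> fperm q \<and> x \<in> pobj F X" for p q x using nom_comp[OF assms] that by blast
  show "pact ac ax p x \<in> pobj F X" if "fperm p \<and> x \<in> pobj F X" for p x using nom_cl[OF assms] that by blast
  show "\<exists>T. finite T \<and> supports (pact ac ax) T x" if "x \<in> pobj F X" for x using nom_supp[OF assms that] .
qed

lemma pmap_in: "\<forall>x\<in>X. h x \<in> Y \<Longrightarrow> v \<in> pobj F X \<Longrightarrow> pmap h v \<in> pobj F Y"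
proof (induction F arbitrary: v)
  case (PProdF F G)
  then obtain a b where c: "v = VPair a b" "a \<in> pobj F X" "b \<in> pobj G X" by auto
  then show ?case using PProdF.IH[of a] PProdF.IH[of b] PProdF.prems by auto
next
  case (PCoprodF I Fs)
  then obtain i u where c: "v = VInj i u" "i \<in> I" "u \<in> pobj (Fs i) X" by auto
  then show ?case using PCoprodF.IH[of "Fs i" u] PCoprodF.prems by auto
qed auto

lemma pmap_eq: "\<forall>p x. fperm p \<and> x \<in> X \<longrightarrow> h (ax p x) = ay p (h x) \<Longrightarrow> v \<in> pobj F X \<Longrightarrow> fperm p \<Longrightarrow>
  pmap h (pact ac ax p v) = pact ac ay p (pmap h v)"
proof (induction F arbitrary: v)
  case (PProdF F G)
  then obtain a b where c: "v = VPair a b" "a \<in> pobj F X" "b \<in> pobj G X" by auto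
  then show ?case using PProdF.IH[of a] PProdF.IH[of b] PProdF.prems by auto
next
  case (PCoprodF I Fs)
  then obtain i u where c: "v = VInj i u" "i \<in> I" "u \<in> pobj (Fs i) X" by auto
  then show ?case using PCoprodF.IH[of "Fs i" u] PCoprodF.prems by auto
qed auto

lemma ext_sub: "\<forall>x\<in>X. f x \<subseteq> Y \<Longrightarrow> v \<in> pobj F X \<Longrightarrow> pext F f v \<subseteq> pobj F Y"
proof (induction F arbitrary: v)
  case (PProdF F G)
  then obtain a b where c: "v = VPair a b" "a \<in> pobj F X" "b \<in> pobj G X" by auto
  then show ?case using PProdF.IH[of a] PProdF.IH[of b] PProdF.prems by auto
next
  case (PCoprodF I Fs)
  then obtain i u where c: "v = VInj i u" "i \<in> I" "u \<in> pobj (Fs i) X" by auto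
  then show ?case using PCoprodF.IH[of "Fs i" u] PCoprodF.prems by auto
next
  case PIdF
  then show ?case by auto blast
qed auto

lemma img_VVar: "pact ac ay p ` VVar ` S = VVar ` (ay p ` S)"
  by (simp add: image_image)

lemma img_VInj: "pact ac ay p ` VInj i ` S = VInj i ` (pact ac ay p ` S)"
  by (simp add: image_image)

lemma ext_eqv: "\<forall>p x. fperm p \<and> x \<in> X \<longrightarrow> f (ax p x) = ay p ` f x \<Longrightarrow> v \<in> pobj F X \<Longrightarrow> fperm p \<Longrightarrow>
  pext F f (pact ac ax p v) = pact ac ay p ` pext F f v"
proof (induction F arbitrary: v)
  case (PConstF C)
  then obtain c where c: "v = VConst c" by auto
  then show ?case by simp
next
  case PIdF
  then obtain x where c: "v = VVar x" "x \<in> X" by auto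
  then show ?case using PIdF.prems by (simp add: img_VVar)
next
  case (PProdF F G)
  then obtain a b where c: "v = VPair a b" "a \<in> pobj F X" "b \<in> pobj G X" by auto
  show ?case using c PProdF.IH[OF PProdF.prems(1) _ PProdF.prems(3)] by (simp add: pact_pairs)
next
  case (PCoprodF I Fs)
  then obtain i u where c: "v = VInj i u" "i \<in> I" "u \<in> pobj (Fs i) X" by auto
  show ?case using c PCoprodF.IH[OF rangeI PCoprodF.prems(1) c(3) PCoprodF.prems(3)] by (simp add: img_VInj)
qed

lemma ext_supp: "wf_pf ac F \<Longrightarrow> \<forall>x\<in>X. \<exists>T. finite T \<and> supports (set_act ay) T (f x) \<Longrightarrow> v \<in> pobj F X \<Longrightarrow>
   \<exists>T. finite T \<and> supports (set_act (pact ac ay)) T (pext F f v)"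
proof (induction F arbitrary: v)
  case (PConstF C)
  then obtain c where c: "v = VConst c" "c \<in> C" by auto
  have "nominal_set C ac" using PConstF.prems(1) by simp
  then obtain T where T: "finite T" "supports ac T c" using c(2) unfolding nominal_set_def by blast
  have "supports (set_act (pact ac ay)) T (pext (PConstF C) f v)"
    using T(2) unfolding c(1) supports_def set_act_def by simp
  then show ?case using T(1) by blast
next
  case PIdF
  then obtain x where c: "v = VVar x" "x \<in> X" by auto
  obtain T where T: "finite T" "supports (set_act ay) T (f x)" using PIdF.prems(2) c(2) by blast
  have "supports (set_act (pact ac ay)) T (pext PIdF f v)"
    using T(2) unfolding c(1) supports_def set_act_def by (simp add: img_VVar)
  then show ?case using T(1) by blast
next
  case (PProdF F G)
  then obtain a b where c: "v = VPair a b" "a \<in> pobj F X" "b \<in> pobj G X" by auto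
  obtain T1 where T1: "finite T1" "supports (set_act (pact ac ay)) T1 (pext F f a)"
    using PProdF.IH(1)[OF _ PProdF.prems(2) c(2)] PProdF.prems(1) by auto
  obtain T2 where T2: "finite T2" "supports (set_act (pact ac ay)) T2 (pext G f b)"
    using PProdF.IH(2)[OF _ PProdF.prems(2) c(3)] PProdF.prems(1) by auto
  have "supports (set_act (pact ac ay)) (T1 \<union> T2) (pext (PProdF F G) f v)"
    using T1(2) T2(2) unfolding c(1) supports_def set_act_def by (simp add: pact_pairs)
  then show ?case using T1(1) T2(1) by blast
next
  case (PCoprodF I Fs)
  then obtain i u where c: "v = VInj i u" "i \<in> I" "u \<in> pobj (Fs i) X" by auto
  obtain T where T: "finite T" "supports (set_act (pact ac ay)) T (pext (Fs i) f u)"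
    using PCoprodF.IH[OF rangeI _ PCoprodF.prems(2) c(3)] PCoprodF.prems(1) c(2) by auto
  have "supports (set_act (pact ac ay)) T (pext (PCoprodF I Fs) f v)"
    using T(2) c(2) unfolding c(1) supports_def set_act_def by (simp add: img_VInj)
  then show ?case using T(1) by blast
qed

lemma ext_id: "v \<in> pobj F X \<Longrightarrow> pext F kl_id v = kl_id v"
proof (induction F arbitrary: v)
  case (PProdF F G)
  then obtain a b where c: "v = VPair a b" "a \<in> pobj F X" "b \<in> pobj G X" by auto
  then show ?case using PProdF.IH[of a] PProdF.IH[of b] by (simp add: kl_id_def)
next
  case (PCoprodF I Fs)
  then obtain i u where c: "v = VInj i u" "i \<in> I" "u \<in> pobj (Fs i) X" by auto
  then show ?case using PCoprodF.IH[of "Fs i" u] by (simp add: kl_id_def)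
qed (auto simp: kl_id_def)

lemma ext_J: "v \<in> pobj F X \<Longrightarrow> pext F (J h) v = J (pmap h) v"
proof (induction F arbitrary: v)
  case (PProdF F G)
  then obtain a b where c: "v = VPair a b" "a \<in> pobj F X" "b \<in> pobj G X" by auto
  then show ?case using PProdF.IH[of a] PProdF.IH[of b] by (simp add: J_def)
next
  case (PCoprodF I Fs)
  then obtain i u where c: "v = VInj i u" "i \<in> I" "u \<in> pobj (Fs i) X" by auto
  then show ?case using PCoprodF.IH[of "Fs i" u] by (simp add: J_def)
qed (auto simp: J_def)

lemma ext_mono: "\<forall>x\<in>X. f x \<subseteq> g x \<Longrightarrow> v \<in> pobj F X \<Longrightarrow> pext F f v \<subseteq> pext F g v"
proof (induction F arbitrary: v)
  case (PProdF F G)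
  then obtain a b where c: "v = VPair a b" "a \<in> pobj F X" "b \<in> pobj G X" by auto
  then show ?case using PProdF.IH[of a] PProdF.IH[of b] PProdF.prems by auto
next
  case (PCoprodF I Fs)
  then obtain i u where c: "v = VInj i u" "i \<in> I" "u \<in> pobj (Fs i) X" by auto
  then show ?case using PCoprodF.IH[of "Fs i" u] PCoprodF.prems by auto
next
  case PIdF
  then show ?case by auto blast
qed auto

lemma ext_comp: "pext F (kl_comp g f) v = kl_comp (pext F g) (pext F f) v"
proof (induction F arbitrary: v)
  case (PConstF C)
  then show ?case by (cases v) (auto simp: kl_comp_def)
next
  case PIdF
  then show ?case by (cases v) (auto simp: kl_comp_def)
next
  case (PProdF F G)
  show ?case
  proof (cases v)
    case (VPair a b)
    have "pext (PProdF F G) (kl_comp g f) (VPair a b) =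
      {VPair a' b' |a' b'. a' \<in> \<Union> (pext F g ` pext F f a) \<and> b' \<in> \<Union> (pext G g ` pext G f b)}"
    proof -
      have IHa: "pext F (kl_comp g f) a = \<Union> (pext F g ` pext F f a)"
        using PProdF.IH(1)[of a] by (simp add: kl_comp_def[of "pext F g"])
      have IHb: "pext G (kl_comp g f) b = \<Union> (pext G g ` pext G f b)"
        using PProdF.IH(2)[of b] by (simp add: kl_comp_def[of "pext G g"])
      show ?thesis by (simp add: IHa IHb)
    qed
    also have "\<dots> = \<Union> (pext (PProdF F G) g ` {VPair a' b' |a' b'. a' \<in> pext F f a \<and> b' \<in> pext G f b})"
    proof (rule set_eqI, rule iffI)
      fix z assume "z \<in> {VPair a' b' |a' b'. a' \<in> \<Union> (pext F g ` pext F f a) \<and> b' \<in> \<Union> (pext G g ` pext G f b)}"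
      then obtain a' b' a'' b'' where z: "z = VPair a' b'" "a'' \<in> pext F f a" "a' \<in> pext F g a''"
        "b'' \<in> pext G f b" "b' \<in> pext G g b''" by blast
      then have "z \<in> pext (PProdF F G) g (VPair a'' b'')" by simp
      moreover have "VPair a'' b'' \<in> {VPair a' b' |a' b'. a' \<in> pext F f a \<and> b' \<in> pext G f b}"
        using z by blast
      ultimately show "z \<in> \<Union> (pext (PProdF F G) g ` {VPair a' b' |a' b'. a' \<in> pext F f a \<and> b' \<in> pext G f b})"
        by blast
    next
      fix z assume "z \<in> \<Union> (pext (PProdF F G) g ` {VPair a' b' |a' b'. a' \<in> pext F f a \<and> b' \<in> pext G f b})"
      then obtain a'' b'' where w: "a'' \<in> pext F f a" "b'' \<in> pext G f b"
        "z \<in> pext (PProdF F G) g (VPair a'' b'')" by blast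
      then obtain a' b' where "z = VPair a' b'" "a' \<in> pext F g a''" "b' \<in> pext G g b''" by auto
      then show "z \<in> {VPair a' b' |a' b'. a' \<in> \<Union> (pext F g ` pext F f a) \<and> b' \<in> \<Union> (pext G g ` pext G f b)}"
        using w by blast
    qed
    also have "\<dots> = kl_comp (pext (PProdF F G) g) (pext (PProdF F G) f) (VPair a b)"
      unfolding kl_comp_def by simp
    finally show ?thesis unfolding VPair .
  qed (auto simp: kl_comp_def)
next
  case (PCoprodF I Fs)
  show ?case
  proof (cases v)
    case (VInj i u)
    show ?thesis using PCoprodF.IH[of "Fs i" u] unfolding VInj by (auto simp: kl_comp_def)
  qed (auto simp: kl_comp_def)
qed

theorem corollary3p14:
  fixes F :: "('c, 'i) pf"
    and ac :: "(nat \<Rightarrow> nat) \<Rightarrow> 'c \<Rightarrow> 'c"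
  assumes "wf_pf ac F"
  shows
    \<comment> \<open>F is an endofunctor on Nom\<close>
    "(\<forall>(X :: 'x set) ax. nominal_set X ax \<longrightarrow> nominal_set (pobj F X) (pact ac ax))
     \<and> (\<forall>(X :: 'x set) ax (Y :: 'y set) ay h. nominal_set X ax \<and> nominal_set Y ay
          \<and> equivariant X ax Y ay h \<longrightarrow>
          equivariant (pobj F X) (pact ac ax) (pobj F Y) (pact ac ay) (pmap h))
     \<comment> \<open>the canonical extension maps Kleisli morphisms to Kleisli morphisms\<close>
     \<and> (\<forall>(X :: 'x set) ax (Y :: 'y set) ay f. nominal_set X ax \<and> nominal_set Y ay
          \<and> kl_mor X ax Y ay f \<longrightarrow>
          kl_mor (pobj F X) (pact ac ax) (pobj F Y) (pact ac ay) (pext F f))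
     \<comment> \<open>it preserves identities\<close>
     \<and> (\<forall>(X :: 'x set) ax. nominal_set X ax \<longrightarrow>
          (\<forall>v\<in>pobj F X. pext F (kl_id :: 'x \<Rightarrow> 'x set) v = kl_id v))
     \<comment> \<open>it preserves Kleisli composition\<close>
     \<and> (\<forall>(X :: 'x set) ax (Y :: 'y set) ay (Z :: 'z set) az f g.
          nominal_set X ax \<and> nominal_set Y ay \<and> nominal_set Z az
          \<and> kl_mor X ax Y ay f \<and> kl_mor Y ay Z az g \<longrightarrow>
          (\<forall>v\<in>pobj F X. pext F (kl_comp g f) v = kl_comp (pext F g) (pext F f) v))
     \<comment> \<open>it is an extension: Fbar J = J F\<close>
     \<and> (\<forall>(X :: 'x set) ax (Y :: 'y set) ay h. nominal_set X ax \<and> nominal_set Y ay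
          \<and> equivariant X ax Y ay h \<longrightarrow>
          (\<forall>v\<in>pobj F X. pext F (J h) v = J (pmap h) v))
     \<comment> \<open>it is locally monotone\<close>
     \<and> (\<forall>(X :: 'x set) ax (Y :: 'y set) ay f g. nominal_set X ax \<and> nominal_set Y ay
          \<and> kl_mor X ax Y ay f \<and> kl_mor X ax Y ay g \<and> (\<forall>x\<in>X. f x \<subseteq> g x) \<longrightarrow>
          (\<forall>v\<in>pobj F X. pext F f v \<subseteq> pext F g v))"
proof (intro conjI allI impI ballI)
  fix X :: "'x set" and ax
  assume "nominal_set X ax"
  then show "nominal_set (pobj F X) (pact ac ax)" using nom_obj assms by blast
next
  fix X :: "'x set" and ax and Y :: "'y set" and ay and h
  assume H: "nominal_set X ax \<and> nominal_set Y ay \<and> equivariant X ax Y ay h"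
  then have h1: "\<forall>x\<in>X. h x \<in> Y" and h2: "\<forall>p x. fperm p \<and> x \<in> X \<longrightarrow> h (ax p x) = ay p (h x)"
    unfolding equivariant_def by auto
  show "equivariant (pobj F X) (pact ac ax) (pobj F Y) (pact ac ay) (pmap h)"
    unfolding equivariant_def using pmap_in[OF h1] pmap_eq[OF h2] by blast
next
  fix X :: "'x set" and ax and Y :: "'y set" and ay and f
  assume H: "nominal_set X ax \<and> nominal_set Y ay \<and> kl_mor X ax Y ay f"
  then have f1: "\<forall>x\<in>X. f x \<subseteq> Y" and f2: "\<forall>x\<in>X. \<exists>T. finite T \<and> supports (set_act ay) T (f x)"
    and f3: "\<forall>p x. fperm p \<and> x \<in> X \<longrightarrow> f (ax p x) = ay p ` f x"
    unfolding kl_mor_def fs_subset_def set_act_def[of ay] by auto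
  show "kl_mor (pobj F X) (pact ac ax) (pobj F Y) (pact ac ay) (pext F f)"
    unfolding kl_mor_def fs_subset_def
  proof (intro conjI allI impI ballI)
    fix v assume v: "v \<in> pobj F X"
    show "pext F f v \<subseteq> pobj F Y" using ext_sub[OF f1 v] .
    show "\<exists>T. finite T \<and> supports (set_act (pact ac ay)) T (pext F f v)" using ext_supp[OF assms f2 v] .
  next
    fix p v assume "fperm p \<and> v \<in> pobj F X"
    then show "pext F f (pact ac ax p v) = set_act (pact ac ay) p (pext F f v)"
      using ext_eqv[OF f3] unfolding set_act_def by blast
  qed
next
  fix X :: "'x set" and ax v
  assume "v \<in> pobj F X"
  then show "pext F (kl_id :: 'x \<Rightarrow> 'x set) v = kl_id v" by (rule ext_id)
next
  fix X :: "'x set" and ax and Y :: "'y set" and ay and Z :: "'z set" and az and f :: "'x \<Rightarrow> 'y set" and g :: "'y \<Rightarrow> 'z set" and v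
  show "pext F (kl_comp g f) v = kl_comp (pext F g) (pext F f) v" by (rule ext_comp)
next
  fix X :: "'x set" and ax and Y :: "'y set" and ay and h :: "'x \<Rightarrow> 'y" and v
  assume "v \<in> pobj F X"
  then show "pext F (J h) v = J (pmap h) v" by (rule ext_J)
next
  fix X :: "'x set" and ax and Y :: "'y set" and ay and f g :: "'x \<Rightarrow> 'y set" and v
  assume H: "nominal_set X ax \<and> nominal_set Y ay \<and> kl_mor X ax Y ay f \<and> kl_mor X ax Y ay g \<and> (\<forall>x\<in>X. f x \<subseteq> g x)"
    and v: "v \<in> pobj F X"
  show "pext F f v \<subseteq> pext F g v" using ext_mono[OF _ v] H by blast
qed

end
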